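(* Let $d\ge1$, $p>1$ and $s\in(0,1)$ with $sp<d$, and let $\mathcal{C}=C(d,p)\,\frac{s(1-s)}{(d-sp)^{p-1}}$ be the fractional Sobolev constant described in the context. Then for every $u\in W^{s,p}(\mathbb{R}^d)$ and every real $c>0$, \[ \int_{\mathbb{R}^d}|u(x)|^p\log\left(\frac{|u(x)|^p}{\|u\|_{L^p(\mathbb{R}^d)}^p}\right)dx+\frac{d}{s}(1+\log c)\|u\|_{L^p(\mathbb{R}^d)}^p\le \frac{d\,e^{p-1}c^p\,\mathcal{C}}{sp}\int_{\mathbb{R}^d}\int_{\mathbb{R}^d}\frac{|u(x)-u(y)|^p}{|x-y|^{d+sp}}\,dx\,dy. \]
   Context: $W^{s,p}(\mathbb{R}^d)$ is the completion of $C_c^\infty(\mathbb{R}^d)$ under the norm $(\|u\|_{L^p}^p+[u]_{W^{s,p}}^p)^{1/p}$, where $[u]_{W^{s,p}(\mathbb{R}^d)}^p=\int_{\mathbb{R}^d}\int_{\mathbb{R}^d}\frac{|u(x)-u(y)|^p}{|x-y|^{d+sp}}dx\,dy$. $C(d,p)>0$ is a constant depending only on $d$ and $p$ such that, with $\mathcal{C}=C(d,p)\frac{s(1-s)}{(d-sp)^{p-1}}$ and $p^*_s=\frac{dp}{d-sp}$, the fractional Sobolev inequality $\|u\|_{L^{p^*_s}(\mathbb{R}^d)}\le \mathcal{C}^{1/p}[u]_{W^{s,p}(\mathbb{R}^d)}$ holds for all $s\in(0,1)$ with $sp<d$ and all $u\in W^{s,p}(\mathbb{R}^d)$ (such a constant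 exists by a theorem of Maz'ya and Shaposhnikova). *)

theory Defs
  imports "HOL-Analysis.Analysis"
begin

text \<open>Functions on R^d are modelled as functions on real^'n with d = CARD('n).
  Lebesgue measure is lebesgue.\<close>

fun Ck :: "nat \<Rightarrow> (real^'n \<Rightarrow> real) \<Rightarrow> bool" where
  "Ck 0 g = continuous_on UNIV g"
| "Ck (Suc k) g = ((\<forall>x. g differentiable (at x)) \<and> continuous_on UNIV g \<and>
      (\<forall>v. Ck k (\<lambda>x. frechet_derivative g (at x) v)))"

definition smooth :: "(real^'n \<Rightarrow> real) \<Rightarrow> bool" where
  "smooth g \<longleftrightarrow> (\<forall>k. Ck k g)"

definition Cc_inf :: "(real^'n \<Rightarrow> real) set" where
  "Cc_inf = {g. smooth g \<and> compact (closure {x. g x \<noteq> 0})}"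

definition Lp_pow :: "real \<Rightarrow> (real^'n \<Rightarrow> real) \<Rightarrow> ennreal" where
  "Lp_pow p u = (\<integral>\<^sup>+ x. ennreal (\<bar>u x\<bar> powr p) \<partial>lebesgue)"

definition gagliardo :: "real \<Rightarrow> real \<Rightarrow> (real^'n \<Rightarrow> real) \<Rightarrow> ennreal" where
  "gagliardo s p u = (\<integral>\<^sup>+ x. \<integral>\<^sup>+ y.
      ennreal (\<bar>u x - u y\<bar> powr p / norm (x - y) powr (real CARD('n) + s * p)) \<partial>lebesgue \<partial>lebesgue)"

text \<open>W^{s,p}(R^d): completion of C_c^infinity under (L^p-norm^p + Gagliardo^p)^(1/p),
  realised as the measurable functions approximable by C_c^infinity functions in this norm.\<close>
definition Wsp :: "real \<Rightarrow> real \<Rightarrow> (real^'n \<Rightarrow> real) set" where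
  "Wsp s p = {u. u \<in> borel_measurable lebesgue \<and>
      (\<exists>\<phi>. (\<forall>n. \<phi> n \<in> Cc_inf) \<and>
        ((\<lambda>n. Lp_pow p (\<lambda>x. \<phi> n x - u x) + gagliardo s p (\<lambda>x. \<phi> n x - u x)) \<longlonglongrightarrow> 0))}"

definition entropy :: "real \<Rightarrow> (real^'n \<Rightarrow> real) \<Rightarrow> ereal" where
  "entropy p u = (let N = enn2real (Lp_pow p u);
      f = (\<lambda>x. \<bar>u x\<bar> powr p * ln (\<bar>u x\<bar> powr p / N)) in
      enn2ereal (\<integral>\<^sup>+ x. ennreal (max 0 (f x)) \<partial>lebesgue)
      - enn2ereal (\<integral>\<^sup>+ x. ennreal (max 0 (- f x)) \<partial>lebesgue))"

end

theory Submission
  imports Defs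
begin

lemma final_real:
  fixes D p c N X E :: real
  assumes D: "D > 0" and c: "c > 0" and N: "N > 0" and X: "X > 0"
    and E: "E \<le> N * D * (ln X - ln N)"
  shows "E + D * p * (1 + ln c) * N \<le> D * exp (p - 1) * c powr p * X"
proof -
  define Y where "Y = X * c powr p * exp p / N"
  have Y: "Y > 0" using X c N by (simp add: Y_def)
  have lnY: "ln Y = ln X + p * ln c + p - ln N"
    using X c N by (simp add: Y_def ln_mult ln_div ln_powr)
  have "ln (Y / exp 1) \<le> Y / exp 1 - 1" using Y by (intro ln_le_minus_one) simp
  hence "ln Y \<le> Y / exp 1" using Y by (simp add: ln_div)
  also have "Y / exp 1 = X * c powr p * exp (p - 1) / N"
    by (simp add: Y_def exp_diff)
  finally have "ln X + p * ln c + p - ln N \<le> X * c powr p * exp (p - 1) / N" using lnY by simp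
  hence "N * D * (ln X + p * ln c + p - ln N) \<le> N * D * (X * c powr p * exp (p - 1) / N)"
    using N D by (intro mult_left_mono) auto
  also have "\<dots> = D * exp (p - 1) * c powr p * X" using N by simp
  finally show ?thesis using E by (simp add: algebra_simps)
qed

lemma pointwise:
  fixes y p q N T :: real
  assumes y: "y \<ge> 0" and p: "p > 0" and pq: "p < q" and N: "N > 0" and T: "T > 0"
  shows "y powr p * ln (y powr p / N) \<le>
     (p / (q - p) * N / T) * y powr q + (p / (q - p) * (ln (T / N) - 1) - ln N) * y powr p"
proof (cases "y = 0")
  case True thus ?thesis using p pq by simp
next
  case False
  hence y: "y > 0" using y by simp
  define z where "z = y powr (q - p)"
  have z: "z > 0" using y by (simp add: z_def)
  have lnz: "ln z = (q - p) * ln y" using y by (simp add: z_def ln_powr)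
  have "ln (z * N / T) \<le> z * N / T - 1" using z N T by (intro ln_le_minus_one) simp
  hence tz: "ln z \<le> z * N / T - 1 + ln (T / N)" using z N T by (simp add: ln_div ln_mult)
  define a where "a = p / (q - p)"
  have a: "a > 0" using p pq by (simp add: a_def)
  have "ln (y powr p / N) = a * ln z - ln N"
    using y N pq by (simp add: ln_div ln_powr lnz a_def)
  also have "\<dots> \<le> a * (z * N / T - 1 + ln (T / N)) - ln N"
    using tz a by (simp add: mult_left_mono)
  finally have "y powr p * ln (y powr p / N) \<le> y powr p * (a * (z * N / T - 1 + ln (T / N)) - ln N)"
    using y by (intro mult_left_mono) auto
  also have "\<dots> = (a * N / T) * (y powr p * z) + (a * (ln (T / N) - 1) - ln N) * y powr p"
    by (simp add: algebra_simps)
  also have "y powr p * z = y powr q" using y by (simp add: z_def powr_add[symmetric])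
  finally show ?thesis by (simp add: a_def)
qed

lemma Lp_int:
  fixes u :: "real^'n \<Rightarrow> real"
  assumes um: "u \<in> borel_measurable lebesgue" and fin: "Lp_pow r u \<noteq> \<infinity>"
  shows "integrable lebesgue (\<lambda>x. \<bar>u x\<bar> powr r)"
    and "integral\<^sup>L lebesgue (\<lambda>x. \<bar>u x\<bar> powr r) = enn2real (Lp_pow r u)"
proof -
  have m: "(\<lambda>x. \<bar>u x\<bar> powr r) \<in> borel_measurable lebesgue" using um by measurable
  from fin obtain R where R: "Lp_pow r u = ennreal R" by (cases "Lp_pow r u") auto
  show "integrable lebesgue (\<lambda>x. \<bar>u x\<bar> powr r)"
    by (rule integrableI_nn_integral_finite[OF m _ R[unfolded Lp_pow_def]]) auto
  show "integral\<^sup>L lebesgue (\<lambda>x. \<bar>u x\<bar> powr r) = enn2real (Lp_pow r u)"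
    unfolding Lp_pow_def by (rule integral_eq_nn_integral[OF m]) auto
qed

lemma Lp_zero:
  fixes u :: "real^'n \<Rightarrow> real"
  assumes um: "u \<in> borel_measurable lebesgue" and z: "Lp_pow r u = 0" and r: "r > 0"
  shows "Lp_pow p u = 0"
proof -
  have m: "(\<lambda>x. ennreal (\<bar>u x\<bar> powr r)) \<in> borel_measurable lebesgue" using um by measurable
  have "AE x in lebesgue. ennreal (\<bar>u x\<bar> powr r) = 0"
    using z m unfolding Lp_pow_def by (simp add: nn_integral_0_iff_AE)
  hence "AE x in lebesgue. ennreal (\<bar>u x\<bar> powr p) = 0"
    by eventually_elim simp
  thus ?thesis unfolding Lp_pow_def by (subst nn_integral_cong_AE[where v="\<lambda>_. 0"]) auto
qed



lemma enn_diff_real: fixes X Y :: ennreal assumes "X < \<infinity>" "Y < \<infinity>"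
  shows "enn2ereal X - enn2ereal Y = ereal (enn2real X - enn2real Y)"
proof -
  obtain x where x: "X = ennreal x" "x \<ge> 0" using assms(1) by (cases X) auto
  obtain y where y: "Y = ennreal y" "y \<ge> 0" using assms(2) by (cases Y) auto
  show ?thesis using x y by simp
qed

lemma int_pos_fin:
  assumes "integrable M (f :: 'a \<Rightarrow> real)"
  shows "(\<integral>\<^sup>+ x. ennreal (f x) \<partial>M) < \<infinity>"
proof -
  have "(\<integral>\<^sup>+ x. ennreal (f x) \<partial>M) \<le> (\<integral>\<^sup>+ x. ennreal \<bar>f x\<bar> \<partial>M)"
    by (intro nn_integral_mono) (auto intro: ennreal_leI)
  also have "\<dots> < \<infinity>" using assms by (simp add: integrable_iff_bounded)
  finally show ?thesis .
qed

theorem theorem1p2: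
  fixes K p s c :: real
    and u :: "real^'n \<Rightarrow> real"
  assumes K_pos: "K > 0"
    and p: "p > 1"
    and sobolev: "\<And>s' (v :: real^'n \<Rightarrow> real). 0 < s' \<Longrightarrow> s' < 1 \<Longrightarrow> s' * p < real CARD('n) \<Longrightarrow>
        v \<in> Wsp s' p \<Longrightarrow>
        (let q = real CARD('n) * p / (real CARD('n) - s' * p) in
          Lp_pow q v \<noteq> \<infinity> \<and>
          enn2real (Lp_pow q v) powr (1 / q)
            \<le> (K * s' * (1 - s') / (real CARD('n) - s' * p) powr (p - 1)) powr (1 / p)
               * enn2real (gagliardo s' p v) powr (1 / p))"
    and s: "0 < s" "s < 1" "s * p < real CARD('n)"
    and u: "u \<in> Wsp s p"
    and c: "c > 0"
  shows "entropy p u + ereal (real CARD('n) / s * (1 + ln c) * enn2real (Lp_pow p u))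
    \<le> ereal (real CARD('n) * exp (p - 1) * c powr p
              * (K * s * (1 - s) / (real CARD('n) - s * p) powr (p - 1)) / (s * p))
      * enn2ereal (gagliardo s p u)"
  
proof -
  define d where "d = real CARD('n)"
  define N where "N = enn2real (Lp_pow p u)"
  define G where "G = gagliardo s p u"
  define C where "C = K * s * (1 - s) / (d - s * p) powr (p - 1)"
  define q where "q = d * p / (d - s * p)"
  define A where "A = d * exp (p - 1) * c powr p * C / (s * p)"
  define D where "D = d / (s * p)"
  have d: "d > 0" by (simp add: d_def)
  have dsp: "d - s * p > 0" using s by (simp add: d_def)
  have Cpos: "C > 0" using K_pos s dsp by (simp add: C_def)
  have Apos: "A > 0" using d p c Cpos s by (simp add: A_def)
  have Dpos: "D > 0" using d p s by (simp add: D_def)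
  have um: "u \<in> borel_measurable lebesgue" using u by (simp add: Wsp_def)
  have N0: "N \<ge> 0" by (simp add: N_def)
  have ent: "entropy p u = enn2ereal (\<integral>\<^sup>+ x. ennreal (max 0 (\<bar>u x\<bar> powr p * ln (\<bar>u x\<bar> powr p / N))) \<partial>lebesgue)
      - enn2ereal (\<integral>\<^sup>+ x. ennreal (max 0 (- (\<bar>u x\<bar> powr p * ln (\<bar>u x\<bar> powr p / N)))) \<partial>lebesgue)"
    by (simp add: entropy_def N_def Let_def)
  have goal: "entropy p u + ereal (d / s * (1 + ln c) * N) \<le> ereal A * enn2ereal G"
  proof (cases "N = 0")
    case True
    hence "entropy p u = 0" by (simp add: ent)
    moreover have "ereal A * enn2ereal G \<ge> 0" using Apos by (simp add: enn2ereal_nonneg)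
    ultimately show ?thesis using True by simp
  next
    case False
    hence Npos: "N > 0" using N0 by simp
    have Nfin: "Lp_pow p u \<noteq> \<infinity>" using False by (auto simp: N_def)
    show ?thesis
    proof (cases "G = \<infinity>")
      case True
      thus ?thesis using Apos by simp
    next
      case False
      then obtain g where g: "G = ennreal g" "g \<ge> 0" by (cases G) auto
      have sob: "Lp_pow q u \<noteq> \<infinity> \<and> enn2real (Lp_pow q u) powr (1 / q) \<le> C powr (1 / p) * g powr (1 / p)"
        using sobolev[OF s u] g by (simp add: Let_def q_def C_def d_def G_def)
      define Q where "Q = enn2real (Lp_pow q u)"
      have Q0: "Q \<ge> 0" by (simp add: Q_def)
      have qpos: "q > 0" using d dsp p by (simp add: q_def)
      have pq: "p < q"
      proof -
        have "p * (d - s * p) < d * p" using s p by (simp add: algebra_simps)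
        thus ?thesis using dsp by (simp add: q_def field_simps)
      qed
      have Qpos: "Q > 0"
      proof (rule ccontr)
        assume "\<not> Q > 0"
        hence "enn2real (Lp_pow q u) = 0" using Q0 unfolding Q_def by linarith
        hence "Lp_pow q u = 0" using sob by (simp add: enn2real_eq_0_iff)
        hence "Lp_pow p u = 0" using Lp_zero[OF um _ qpos] by blast
        thus False using Npos by (simp add: N_def)
      qed
      define T where "T = (C * g) powr (q / p)"
      have "Q = (Q powr (1 / q)) powr q" using Q0 qpos by (simp add: powr_powr)
      also have "\<dots> \<le> ((C * g) powr (1 / p)) powr q"
        using sob Q0 qpos Cpos g by (intro powr_mono2) (auto simp: Q_def powr_mult)
      also have "\<dots> = T" by (simp add: T_def powr_powr)
      finally have QT: "Q \<le> T" .
      have Tpos: "T > 0" using QT Qpos by simp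
      hence Cg: "C * g > 0" using g Cpos by (auto simp: T_def)
      define a where "a = p / (q - p)"
      define \<alpha> where "\<alpha> = a * N / T"
      define \<beta> where "\<beta> = a * (ln (T / N) - 1) - ln N"
      define f where "f = (\<lambda>x. \<bar>u x\<bar> powr p * ln (\<bar>u x\<bar> powr p / N))"
      define h where "h = (\<lambda>x. \<alpha> * \<bar>u x\<bar> powr q + \<beta> * \<bar>u x\<bar> powr p)"
      have fh: "f x \<le> h x" for x
        unfolding f_def h_def \<alpha>_def \<beta>_def a_def
        using pointwise[of "\<bar>u x\<bar>" p q N T] p pq Npos Tpos by simp
      have iq: "integrable lebesgue (\<lambda>x. \<bar>u x\<bar> powr q)"
        and iqv: "integral\<^sup>L lebesgue (\<lambda>x. \<bar>u x\<bar> powr q) = Q"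
        using Lp_int[OF um, of q] sob by (auto simp: Q_def)
      have ip: "integrable lebesgue (\<lambda>x. \<bar>u x\<bar> powr p)"
        and ipv: "integral\<^sup>L lebesgue (\<lambda>x. \<bar>u x\<bar> powr p) = N"
        using Lp_int[OF um, of p] Nfin by (auto simp: N_def)
      have ih: "integrable lebesgue h" unfolding h_def using iq ip by auto
      have ihv: "integral\<^sup>L lebesgue h = \<alpha> * Q + \<beta> * N"
        unfolding h_def using iq ip iqv ipv by simp
      have hsplit: "integral\<^sup>L lebesgue h = enn2real (\<integral>\<^sup>+ x. ennreal (h x) \<partial>lebesgue)
          - enn2real (\<integral>\<^sup>+ x. ennreal (- h x) \<partial>lebesgue)"
        by (rule real_lebesgue_integral_def[OF ih])
      have hp: "(\<integral>\<^sup>+ x. ennreal (h x) \<partial>lebesgue) < \<infinity>"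
        using ih by (rule int_pos_fin)
      have hm: "(\<integral>\<^sup>+ x. ennreal (- h x) \<partial>lebesgue) < \<infinity>"
      proof -
        have "integrable lebesgue (\<lambda>x. - h x)" using ih by simp
        thus ?thesis by (rule int_pos_fin)
      qed
      have e1: "(\<integral>\<^sup>+ x. ennreal (max 0 (f x)) \<partial>lebesgue) \<le> (\<integral>\<^sup>+ x. ennreal (h x) \<partial>lebesgue)"
        by (intro nn_integral_mono) (simp add: ennreal_max_0 ennreal_leI fh)
      have e2: "(\<integral>\<^sup>+ x. ennreal (- h x) \<partial>lebesgue) \<le> (\<integral>\<^sup>+ x. ennreal (max 0 (- f x)) \<partial>lebesgue)"
        by (intro nn_integral_mono) (simp add: ennreal_max_0 ennreal_leI fh)
      have entle: "entropy p u \<le> ereal (\<alpha> * Q + \<beta> * N)"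
      proof -
        have "entropy p u = enn2ereal (\<integral>\<^sup>+ x. ennreal (max 0 (f x)) \<partial>lebesgue)
            - enn2ereal (\<integral>\<^sup>+ x. ennreal (max 0 (- f x)) \<partial>lebesgue)"
          by (simp add: ent f_def)
        also have "\<dots> \<le> enn2ereal (\<integral>\<^sup>+ x. ennreal (h x) \<partial>lebesgue)
            - enn2ereal (\<integral>\<^sup>+ x. ennreal (- h x) \<partial>lebesgue)"
          using e1 e2 ereal_minus_mono less_eq_ennreal.rep_eq by auto
        also have "\<dots> = ereal (integral\<^sup>L lebesgue h)"
          using hp hm hsplit enn_diff_real by simp
        finally show ?thesis using ihv by simp
      qed
      have aQ: "\<alpha> * Q \<le> a * N"
      proof -
        have a0: "a > 0" using p pq by (simp add: a_def)
        have "\<alpha> * Q = a * N * (Q / T)" by (simp add: \<alpha>_def)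
        also have "\<dots> \<le> a * N * 1" using a0 Npos QT Tpos Q0
          by (intro mult_left_mono) auto
        finally show ?thesis by simp
      qed
      have lnT: "ln T = q / p * ln (C * g)" using Cg by (simp add: T_def ln_powr)
      have aD: "a * (q / p) = D" "a + 1 = D"
        using p pq dsp s d by (auto simp: a_def D_def q_def field_simps)
      have E: "\<alpha> * Q + \<beta> * N \<le> N * D * (ln (C * g) - ln N)"
      proof -
        have "\<alpha> * Q + \<beta> * N \<le> a * N + \<beta> * N" using aQ by simp
        also have "\<dots> = N * (a * ln T - (a + 1) * ln N)"
          using Npos Tpos by (simp add: \<beta>_def ln_div algebra_simps)
        also have "\<dots> = N * ((a * (q / p)) * ln (C * g) - (a + 1) * ln N)"
          by (simp add: lnT mult.assoc)
        also have "\<dots> = N * D * (ln (C * g) - ln N)"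
          unfolding aD by (simp add: algebra_simps)
        finally show ?thesis .
      qed
      have fin: "\<alpha> * Q + \<beta> * N + D * p * (1 + ln c) * N \<le> D * exp (p - 1) * c powr p * (C * g)"
        by (rule final_real[OF Dpos c Npos Cg E])
      have X: "D * p * (1 + ln c) * N = d / s * (1 + ln c) * N" using p by (simp add: D_def)
      have Y: "D * exp (p - 1) * c powr p * (C * g) = A * g" by (simp add: D_def A_def)
      have fin': "\<alpha> * Q + \<beta> * N + d / s * (1 + ln c) * N \<le> A * g"
        using fin unfolding X Y .
      have "entropy p u + ereal (d / s * (1 + ln c) * N) \<le> ereal (\<alpha> * Q + \<beta> * N) + ereal (d / s * (1 + ln c) * N)"
        using entle by (intro add_right_mono)
      also have "\<dots> \<le> ereal (A * g)" using fin' by simp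
      also have "\<dots> = ereal A * enn2ereal G" using g by simp
      finally show ?thesis .
    qed
  qed
  thus ?thesis by (simp add: d_def N_def G_def A_def C_def)
qed

end
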